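(* Let $(\Omega,F,\mathbf P)$ be a non-trivial probability space and let $\psi\colon[1,\infty)\to(0,\infty)$ be a finite, continuous, strictly increasing function with $\psi(1)=\inf_{p\ge1}\psi(p)=1$. Let $S\subset[1,\infty)$ be a Borel set with $1\in S$. For $p\ge1$ put $p^+[S](p)=\inf\{t\in S:\ t\ge p\}$ and $$Z[\psi,S]=\sup_{p\ge1}\frac{\psi(p^+[S](p))}{\psi(p)}.$$ Suppose $Z[\psi,S]<\infty$. Then for every measurable $f\colon\Omega\to\mathbb R$, $$\|f\|G^{(S)}\psi\le\|f\|G\psi\le Z[\psi,S]\,\|f\|G^{(S)}\psi,$$ where $$\|f\|G\psi=\sup_{p\ge1}\frac{|f|_p}{\psi(p)},\qquad \|f\|G^{(S)}\psi=\sup_{p\in S}\frac{|f|_p}{\psi(p)}.$$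
   Context: For a random variable $f$ on $(\Omega,F,\mathbf P)$, $|f|_p=\left(\mathbf E|f|^p\right)^{1/p}$ for $1\le p<\infty$ (possibly $+\infty$). The quantity $\|f\|G\psi$ is the Grand Lebesgue Space norm with generating function $\psi$, and $\|f\|G^{(S)}\psi$ is the restricted Grand Lebesgue Space norm. *)

theory Defs
  imports "HOL-Probability.Probability"
begin

definition lp_norm :: "'a measure \<Rightarrow> ('a \<Rightarrow> real) \<Rightarrow> real \<Rightarrow> ennreal" where
  "lp_norm M f p =
     (let I = (\<integral>\<^sup>+ x. ennreal (\<bar>f x\<bar> powr p) \<partial>M)
      in if I = \<infinity> then \<infinity> else ennreal (enn2real I powr (1 / p)))"

definition GLS_norm :: "'a measure \<Rightarrow> (real \<Rightarrow> real) \<Rightarrow> ('a \<Rightarrow> real) \<Rightarrow> ennreal" where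
  "GLS_norm M psi f = (SUP p\<in>{1..}. lp_norm M f p / ennreal (psi p))"

definition GLS_norm_restr :: "'a measure \<Rightarrow> (real \<Rightarrow> real) \<Rightarrow> real set \<Rightarrow> ('a \<Rightarrow> real) \<Rightarrow> ennreal" where
  "GLS_norm_restr M psi S f = (SUP p\<in>S. lp_norm M f p / ennreal (psi p))"

text \<open>p^+[S](p) = inf {t in S. t >= p}.  When this set is empty the infimum is +infinity
  and we take psi(p^+)/psi(p) = +infinity.\<close>
definition p_plus :: "real set \<Rightarrow> real \<Rightarrow> real" where
  "p_plus S p = Inf {t \<in> S. t \<ge> p}"

definition Z_const :: "(real \<Rightarrow> real) \<Rightarrow> real set \<Rightarrow> ennreal" where
  "Z_const psi S = (SUP p\<in>{1..}.
      (if \<exists>t\<in>S. t \<ge> p then ennreal (psi (p_plus S p) / psi p) else \<infinity>))"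

end

theory Submission
  imports Defs
begin

lemma tangent_powr:
  fixes r c y :: real
  assumes r: "1 \<le> r" and c: "0 < c" and y: "0 \<le> y"
  shows "c powr r + r * c powr (r - 1) * (y - c) \<le> y powr r"
proof (cases "y = 0")
  case True
  have e: "c powr (r - 1) * c = c powr r" using c by (simp add: powr_add[symmetric] powr_diff)
  have "r * c powr (r - 1) * (0 - c) = - r * c powr r" proof -
    have "r * c powr (r - 1) * (0 - c) = - r * (c powr (r - 1) * c)" by (simp add: algebra_simps)
    then show ?thesis using e by simp
  qed
  moreover have "c powr r \<le> r * c powr r" using r c by (simp add: mult_le_cancel_right1)
  ultimately have "c powr r + r * c powr (r - 1) * (0 - c) \<le> 0" by (simp only: mult_minus_left)
  then show ?thesis using True by simp
next
  case False
  then have yp: "y > 0" using y by simp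
  have "y powr r - c powr r \<ge> (r * c powr (r - 1)) * (y - c)"
  proof (rule convex_on_imp_above_tangent[where A="{0<..}"])
    show "convex_on {0<..} (\<lambda>x. x powr r)" using powr_convex[OF r] .
    show "connected {0::real<..}" by simp
    show "c \<in> interior {0<..}" using c by (simp add: interior_open)
    show "y \<in> {0<..}" using yp by simp
    show "((\<lambda>x. x powr r) has_field_derivative r * c powr (r - 1)) (at c within {0<..})"
      using c by (auto intro!: derivative_eq_intros)
  qed
  then show ?thesis by simp
qed

lemma real_lyap:
  fixes M :: "'a measure" and g :: "'a \<Rightarrow> real"
  assumes P: "prob_space M" and r: "1 \<le> r"
    and gi: "integrable M g" and hi: "integrable M (\<lambda>x. g x powr r)"
    and g0: "\<And>x. 0 \<le> g x"
  shows "(integral\<^sup>L M g) powr r \<le> integral\<^sup>L M (\<lambda>x. g x powr r)"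
proof -
  interpret prob_space M by fact
  define c where "c = integral\<^sup>L M g"
  have c0: "0 \<le> c" unfolding c_def using g0 by simp
  show ?thesis
  proof (cases "c = 0")
    case True
    then show ?thesis using g0 c_def by simp
  next
    case False
    then have cp: "0 < c" using c0 by simp
    have "integral\<^sup>L M (\<lambda>x. c powr r + r * c powr (r - 1) * (g x - c))
        \<le> integral\<^sup>L M (\<lambda>x. g x powr r)"
      using tangent_powr[OF r cp g0] gi hi by (intro integral_mono) auto
    moreover have "integral\<^sup>L M (\<lambda>x. c powr r + r * c powr (r - 1) * (g x - c)) = c powr r"
      using gi by (simp add: c_def prob_space)
    ultimately show ?thesis by (simp add: c_def)
  qed
qed

lemma lp_mono:
  fixes M :: "'a measure" and f :: "'a \<Rightarrow> real"
  assumes P: "prob_space M" and fm[measurable]: "f \<in> borel_measurable M"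
    and p: "1 \<le> p" and pt: "p \<le> t"
  shows "lp_norm M f p \<le> lp_norm M f t"
proof -
  interpret prob_space M by fact
  define g where "g x = \<bar>f x\<bar> powr p" for x
  define h where "h x = \<bar>f x\<bar> powr t" for x
  have t: "1 \<le> t" using p pt by simp
  have gm[measurable]: "g \<in> borel_measurable M" unfolding g_def by measurable
  have hm[measurable]: "h \<in> borel_measurable M" unfolding h_def by measurable
  show ?thesis
  proof (cases "(\<integral>\<^sup>+ x. ennreal (h x) \<partial>M) = \<infinity>")
    case True
    then show ?thesis by (simp add: lp_norm_def Let_def h_def)
  next
    case False
    have hi: "integrable M h"
      by (rule integrableI_bounded) (use False in \<open>auto simp: h_def top.not_eq_extremum\<close>)
    have bnd: "\<bar>g x\<bar> \<le> \<bar>1 + h x\<bar>" for x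
    proof -
      have "g x \<le> 1 + h x"
      proof (cases "\<bar>f x\<bar> \<le> 1")
        case True
        then have "g x \<le> 1" unfolding g_def using p by (simp add: powr_le1)
        moreover have "0 \<le> h x" by (simp add: h_def)
        ultimately show ?thesis by simp
      next
        case False
        then have "g x \<le> h x" unfolding g_def h_def using pt by (intro powr_mono) auto
        then show ?thesis by simp
      qed
      then show ?thesis by (simp add: g_def h_def)
    qed
    have gi: "integrable M g"
      by (rule Bochner_Integration.integrable_bound[where f="\<lambda>x. 1 + h x"]) (use hi bnd in auto)
    have Ig: "(\<integral>\<^sup>+ x. ennreal (g x) \<partial>M) = ennreal (integral\<^sup>L M g)"
      by (rule nn_integral_eq_integral[OF gi]) (simp add: g_def)
    have Ih: "(\<integral>\<^sup>+ x. ennreal (h x) \<partial>M) = ennreal (integral\<^sup>L M h)"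
      by (rule nn_integral_eq_integral[OF hi]) (simp add: h_def)
    have g0: "0 \<le> integral\<^sup>L M g" by (simp add: g_def)
    have h0: "0 \<le> integral\<^sup>L M h" by (simp add: h_def)
    have hg: "h x = g x powr (t / p)" for x
      using p by (simp add: g_def h_def powr_powr)
    have key: "(integral\<^sup>L M g) powr (t / p) \<le> integral\<^sup>L M h"
    proof -
      have "h = (\<lambda>x. g x powr (t / p))" using hg by auto
      then show ?thesis using real_lyap[OF P _ gi, of "t / p"] hi p pt by (simp add: g_def)
    qed
    have "(integral\<^sup>L M g) powr (1 / p) = ((integral\<^sup>L M g) powr (t / p)) powr (1 / t)"
      using p t by (simp add: powr_powr)
    also have "\<dots> \<le> (integral\<^sup>L M h) powr (1 / t)"
      using key g0 t by (intro powr_mono2) auto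
    finally have "(integral\<^sup>L M g) powr (1 / p) \<le> (integral\<^sup>L M h) powr (1 / t)" .
    then show ?thesis
      unfolding lp_norm_def Let_def
      using Ig Ih g0 h0 by (simp add: g_def[symmetric] h_def[symmetric])
  qed
qed

theorem theorem1p1:
  fixes M :: "'a measure" and psi :: "real \<Rightarrow> real" and S :: "real set"
    and f :: "'a \<Rightarrow> real"
  assumes "prob_space M"
    and "\<exists>A\<in>sets M. 0 < measure M A \<and> measure M A < 1"
    and "continuous_on {1..} psi"
    and "strict_mono_on {1..} psi"
    and "\<forall>p\<ge>1. psi p > 0"
    and "psi 1 = 1"
    and "(INF p\<in>{1..}. psi p) = 1"
    and "S \<in> sets borel" and "S \<subseteq> {1..}" and "1 \<in> S"
    and "Z_const psi S < \<infinity>"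
    and "f \<in> borel_measurable M"
  shows "GLS_norm_restr M psi S f \<le> GLS_norm M psi f
       \<and> GLS_norm M psi f \<le> Z_const psi S * GLS_norm_restr M psi S f"
proof
  note P = assms(1) and cont = assms(3) and pos = assms(5) and SS = assms(9)
    and Zfin = assms(11) and fm = assms(12)
  show "GLS_norm_restr M psi S f \<le> GLS_norm M psi f"
    unfolding GLS_norm_restr_def GLS_norm_def using SS by (rule SUP_subset_mono) simp
  define R where "R = GLS_norm_restr M psi S f"
  define Z where "Z = Z_const psi S"
  have Rt: "lp_norm M f t \<le> R * ennreal (psi t)" if "t \<in> S" for t
  proof -
    have t1: "t \<ge> 1" using SS that by auto
    have "lp_norm M f t / ennreal (psi t) \<le> R"
      unfolding R_def GLS_norm_restr_def using that by (rule SUP_upper)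
    then have "lp_norm M f t / ennreal (psi t) * ennreal (psi t) \<le> R * ennreal (psi t)"
      by (rule mult_right_mono) simp
    moreover have "lp_norm M f t / ennreal (psi t) * ennreal (psi t) = lp_norm M f t"
    proof -
      have "psi t > 0" using pos t1 by auto
      then show ?thesis by (simp add: ennreal_divide_times ennreal_times_divide ennreal_mult_divide_eq)
    qed
    ultimately show ?thesis by simp
  qed
  show "GLS_norm M psi f \<le> Z * R"
    unfolding GLS_norm_def
  proof (rule SUP_least)
    fix p :: real assume "p \<in> {1..}"
    then have p1: "1 \<le> p" by simp
    define T where "T = {t \<in> S. t \<ge> p}"
    have Tne: "\<exists>t\<in>S. t \<ge> p"
    proof (rule ccontr)
      assume "\<not> ?thesis"
      then have "(if \<exists>t\<in>S. t \<ge> p then ennreal (psi (p_plus S p) / psi p) else \<infinity>) = \<infinity>" by simp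
      moreover have "(if \<exists>t\<in>S. t \<ge> p then ennreal (psi (p_plus S p) / psi p) else \<infinity>) \<le> Z"
        unfolding Z_def Z_const_def using \<open>p \<in> {1..}\<close> by (rule SUP_upper)
      ultimately show False using Zfin Z_def by simp
    qed
    define q where "q = p_plus S p"
    have qT: "q = Inf T" unfolding q_def p_plus_def T_def ..
    have Tne': "T \<noteq> {}" using Tne T_def by auto
    have bdd: "bdd_below T" unfolding T_def by (rule bdd_belowI[of _ p]) auto
    have pq: "p \<le> q" unfolding qT using Tne' by (rule cInf_greatest) (auto simp: T_def)
    have q1: "1 \<le> q" using p1 pq by simp
    have psip: "psi p > 0" and psiq: "psi q > 0" using pos p1 q1 by auto
    have Zq: "ennreal (psi q / psi p) \<le> Z"
    proof -
      have "(if \<exists>t\<in>S. t \<ge> p then ennreal (psi (p_plus S p) / psi p) else \<infinity>) \<le> Z"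
        unfolding Z_def Z_const_def using \<open>p \<in> {1..}\<close> by (rule SUP_upper)
      then show ?thesis using Tne q_def by simp
    qed
    have A: "lp_norm M f p \<le> R * ennreal (psi q)"
    proof (cases "R = \<infinity>")
      case True
      then show ?thesis using psiq by (simp add: ennreal_mult_top)
    next
      case False
      then obtain r where r: "R = ennreal r" "0 \<le> r" by (cases R rule: ennreal_cases) auto
      show ?thesis
      proof (rule ennreal_le_epsilon)
        fix e :: real assume e: "0 < e"
        have "0 < e / (r + 1)" using e r by simp
        then obtain d where d: "d > 0"
          and dd: "\<And>y. y \<in> {1..} \<Longrightarrow> dist y q < d \<Longrightarrow> dist (psi y) (psi q) < e / (r + 1)"
          using cont q1 unfolding continuous_on_iff by (metis atLeast_iff)
        have "Inf T < q + d" using qT d by simp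
        then obtain t where tT: "t \<in> T" and tlt: "t < q + d"
          using Tne' by (auto simp: cInf_less_iff[OF Tne' bdd])
        have qt: "q \<le> t" unfolding qT using tT bdd by (rule cInf_lower)
        have t1: "t \<in> {1..}" using tT p1 T_def by auto
        have "dist (psi t) (psi q) < e / (r + 1)" using dd[OF t1] qt tlt by (simp add: dist_real_def)
        then have pt: "psi t \<le> psi q + e / (r + 1)" by (simp add: dist_real_def)
        have "r * psi t \<le> r * (psi q + e / (r + 1))" using pt r by (intro mult_left_mono) auto
        also have "\<dots> = r * psi q + e * (r / (r + 1))" using r by (simp add: algebra_simps)
        also have "\<dots> \<le> r * psi q + e * 1" using r e by (intro add_left_mono mult_left_mono) auto
        finally have rt: "r * psi t \<le> r * psi q + e" by simp
        have "lp_norm M f p \<le> lp_norm M f t"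
          using lp_mono[OF P fm p1] tT T_def by auto
        also have "\<dots> \<le> R * ennreal (psi t)" using Rt tT T_def by auto
        also have "\<dots> = ennreal (r * psi t)" proof -
          have "0 \<le> psi t" using pos t1 by (auto intro: less_imp_le)
          then show ?thesis using r by (simp add: ennreal_mult)
        qed
        also have "\<dots> \<le> ennreal (r * psi q + e)" using rt by (rule ennreal_leI)
        also have "\<dots> = R * ennreal (psi q) + ennreal e"
          using r psiq e by (simp add: ennreal_mult ennreal_plus[symmetric])
        finally show "lp_norm M f p \<le> R * ennreal (psi q) + ennreal e" .
      qed
    qed
    have "R * ennreal (psi q) = R * ennreal (psi q / psi p) * ennreal (psi p)"
      using psip psiq by (simp add: mult.assoc ennreal_mult[symmetric])
    also have "\<dots> \<le> R * Z * ennreal (psi p)"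
      by (intro mult_right_mono mult_left_mono Zq) auto
    finally have "lp_norm M f p \<le> Z * R * ennreal (psi p)" using A by (simp add: mult.commute)
    then show "lp_norm M f p / ennreal (psi p) \<le> Z * R"
      using psip by (intro divide_le_posI_ennreal) (auto simp: mult.commute)
  qed
qed

end
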